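(* In the setting of the context, for $\sigma\in\left]0,1\right]$ the orthogonal complement of $\mathcal K_0(\sigma)$ in $L^2([0,\sigma];\mathbb R^n)$ with respect to the inner product $\mathcal R_\sigma$ is $\mathcal K_0(\sigma)^\perp=\{h'\cdot A[Y]+2h\cdot A[Y'] : h\in H^1([0,\sigma];\mathbb R)\}$.
   Context: $g$ is a nondegenerate symmetric bilinear form on $\mathbb R^n$ of index $1$, and $Y:[0,1]\to\mathbb R^n$ is a $C^2$ map with $g(Y(t),Y(t))<0$ for all $t$. Define positive definite inner products $g^{(r)}_t(V,W)=g(V,W)-2\,g(V,Y(t))g(W,Y(t))/g(Y(t),Y(t))$ on $\mathbb R^n$, and let $A(t)$ be the $g^{(r)}_t$-symmetric operator with $g(V,W)=g^{(r)}_t(A(t)[V],W)$ for all $V,W$. On $L^2([0,\sigma];\mathbb R^n)$ use the inner product $\mathcal R_\sigma(V,W)=\int_0^\sigma g^{(r)}_t(V,W)\,dt$. $\mathcal K_0(\sigma)$ is the closed subspace of $V\in L^2([0,\sigma];\mathbb R^n)$ such that $g(V(t),Y(t))=2\int_0^t g(V,Y')\,ds$ for a.e. $t\in[0,\sigma]$ and $\int_0^\sigma g(V,Y')\,ds=0$. In the formula, $A[Y]$ and $A[Y']$ denote the functions $t\mapsto A(t)[Y(t)]$ and $t\mapsto A(t)[Y'(t)]$. *)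

theory Defs
  imports "HOL-Analysis.Analysis"
begin

definition nondeg_sym_bilinear :: "('a::euclidean_space \<Rightarrow> 'a \<Rightarrow> real) \<Rightarrow> bool" where
  "nondeg_sym_bilinear g \<longleftrightarrow> bilinear g \<and> (\<forall>x y. g x y = g y x) \<and>
     (\<forall>x. (\<forall>y. g x y = 0) \<longrightarrow> x = 0)"

definition form_index :: "('a::euclidean_space \<Rightarrow> 'a \<Rightarrow> real) \<Rightarrow> nat" where
  "form_index g = (GREATEST k. \<exists>W. subspace W \<and> dim W = k \<and>
                     (\<forall>x\<in>W. x \<noteq> 0 \<longrightarrow> g x x < 0))"

definition gr :: "('a \<Rightarrow> 'a \<Rightarrow> real) \<Rightarrow> (real \<Rightarrow> 'a) \<Rightarrow> real \<Rightarrow> 'a \<Rightarrow> 'a \<Rightarrow> real" where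
  "gr g Y t v w = g v w - 2 * g v (Y t) * g w (Y t) / g (Y t) (Y t)"

text \<open>L^2([0,\<sigma>]) membership (functions, to be read modulo a.e. equality).\<close>
definition L2 :: "real \<Rightarrow> (real \<Rightarrow> 'a::euclidean_space) \<Rightarrow> bool" where
  "L2 \<sigma> V \<longleftrightarrow> V \<in> borel_measurable (lebesgue_on {0..\<sigma>}) \<and>
      integrable (lebesgue_on {0..\<sigma>}) (\<lambda>t. (norm (V t))\<^sup>2)"

text \<open>h \<in> H^1([0,\<sigma>];R) with weak derivative h' \<in> L^2 (absolutely continuous representative).\<close>
definition H1 :: "real \<Rightarrow> (real \<Rightarrow> real) \<Rightarrow> (real \<Rightarrow> real) \<Rightarrow> bool" where
  "H1 \<sigma> h h' \<longleftrightarrow> L2 \<sigma> h' \<and>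
      (\<forall>t\<in>{0..\<sigma>}. h t = h 0 + integral\<^sup>L (lebesgue_on {0..t}) h')"

definition Rsig :: "('a \<Rightarrow> 'a \<Rightarrow> real) \<Rightarrow> (real \<Rightarrow> 'a) \<Rightarrow> real \<Rightarrow> (real \<Rightarrow> 'a) \<Rightarrow> (real \<Rightarrow> 'a) \<Rightarrow> real" where
  "Rsig g Y \<sigma> V W = integral\<^sup>L (lebesgue_on {0..\<sigma>}) (\<lambda>t. gr g Y t (V t) (W t))"

definition K0 :: "('a::euclidean_space \<Rightarrow> 'a \<Rightarrow> real) \<Rightarrow> (real \<Rightarrow> 'a) \<Rightarrow> (real \<Rightarrow> 'a) \<Rightarrow> real \<Rightarrow> (real \<Rightarrow> 'a) set" where
  "K0 g Y Y' \<sigma> = {V. L2 \<sigma> V \<and>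
      (AE t in lebesgue_on {0..\<sigma>}. g (V t) (Y t) = 2 * integral\<^sup>L (lebesgue_on {0..t}) (\<lambda>s. g (V s) (Y' s))) \<and>
      integral\<^sup>L (lebesgue_on {0..\<sigma>}) (\<lambda>s. g (V s) (Y' s)) = 0}"

end

theory Submission
  imports Defs
begin


lemma prod_integrable:
  fixes f k :: "real \<Rightarrow> real"
  assumes f: "integrable lborel f" and k: "integrable lborel k"
  shows "integrable (lborel \<Otimes>\<^sub>M lborel) (\<lambda>(t,u). f t * k u)"
proof (rule lborel_pair.Fubini_integrable)
  have [measurable]: "f \<in> borel_measurable borel" "k \<in> borel_measurable borel"
    using f k by auto
  show "(\<lambda>(t,u). f t * k u) \<in> borel_measurable (lborel \<Otimes>\<^sub>M lborel)" by measurable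
  have "(\<lambda>t. \<integral>u. norm (case (t, u) of (t, u) \<Rightarrow> f t * k u) \<partial>lborel) = (\<lambda>t. \<bar>f t\<bar> * (\<integral>u. \<bar>k u\<bar> \<partial>lborel))"
    by (simp add: abs_mult)
  then show "integrable lborel (\<lambda>t. \<integral>u. norm (case (t, u) of (t, u) \<Rightarrow> f t * k u) \<partial>lborel)"
    using f by simp
  show "AE t in lborel. integrable lborel (\<lambda>u. case (t, u) of (t, u) \<Rightarrow> f t * k u)"
    using k by simp
qed

lemma ibp_lborel:
  fixes f k :: "real \<Rightarrow> real"
  assumes f: "integrable lborel f" and k: "integrable lborel k"
  shows "(\<integral>t. f t * (\<integral>u. indicator {..t} u * k u \<partial>lborel) \<partial>lborel)
       + (\<integral>u. k u * (\<integral>t. indicator {..u} t * f t \<partial>lborel) \<partial>lborel)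
       = (\<integral>t. f t \<partial>lborel) * (\<integral>u. k u \<partial>lborel)"
proof -
  have [measurable]: "f \<in> borel_measurable borel" "k \<in> borel_measurable borel"
    using f k by auto
  have P: "integrable (lborel \<Otimes>\<^sub>M lborel) (\<lambda>(t,u). f t * k u)"
    by (rule prod_integrable[OF f k])
  define H1 where "H1 t u = (if u \<le> t then f t * k u else 0)" for t u :: real
  define H2 where "H2 t u = (if t \<le> u then f t * k u else 0)" for t u :: real
  define H3 where "H3 t u = (if t = u then f t * k u else 0)" for t u :: real
  have I: "integrable (lborel \<Otimes>\<^sub>M lborel) (case_prod H)"
    if "H = H1 \<or> H = H2 \<or> H = H3" for H
  proof (rule Bochner_Integration.integrable_bound[OF P])
    show "case_prod H \<in> borel_measurable (lborel \<Otimes>\<^sub>M lborel)"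
      using that unfolding H1_def H2_def H3_def by (elim disjE; simp; measurable)
    show "AE x in lborel \<Otimes>\<^sub>M lborel. norm (case_prod H x) \<le> norm (case x of (t, u) \<Rightarrow> f t * k u)"
      using that unfolding H1_def H2_def H3_def by (auto split: prod.splits)
  qed
  have e1: "(\<integral>t. f t * (\<integral>u. indicator {..t} u * k u \<partial>lborel) \<partial>lborel) = (\<integral>t. (\<integral>u. H1 t u \<partial>lborel) \<partial>lborel)"
    by (rule Bochner_Integration.integral_cong) (auto simp: H1_def indicator_def intro!: Bochner_Integration.integral_cong simp flip: integral_mult_right_zero)
  have e2: "(\<integral>u. k u * (\<integral>t. indicator {..u} t * f t \<partial>lborel) \<partial>lborel) = (\<integral>u. (\<integral>t. H2 t u \<partial>lborel) \<partial>lborel)"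
    by (rule Bochner_Integration.integral_cong) (auto simp: H2_def indicator_def intro!: Bochner_Integration.integral_cong simp flip: integral_mult_right_zero)
  have e3: "(\<integral>t. (\<integral>u. H3 t u \<partial>lborel) \<partial>lborel) = 0"
  proof -
    have "(\<integral>u. H3 t u \<partial>lborel) = 0" for t
    proof -
      have "AE u in lborel. u \<noteq> t" by (rule AE_lborel_singleton)
      then have "AE u in lborel. H3 t u = 0" by (auto simp: H3_def)
      then show ?thesis by (simp add: integral_eq_zero_AE)
    qed
    then show ?thesis by simp
  qed
  have e4: "(\<integral>t. (\<integral>u. f t * k u \<partial>lborel) \<partial>lborel) = (\<integral>t. f t \<partial>lborel) * (\<integral>u. k u \<partial>lborel)"
    by simp
  have "(\<integral>t. (\<integral>u. H1 t u \<partial>lborel) \<partial>lborel) + (\<integral>u. (\<integral>t. H2 t u \<partial>lborel) \<partial>lborel)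
      = integral\<^sup>L (lborel \<Otimes>\<^sub>M lborel) (case_prod H1) + integral\<^sup>L (lborel \<Otimes>\<^sub>M lborel) (case_prod H2)"
    using lborel_pair.integral_fst[OF I[of H1]] lborel_pair.integral_snd[OF I[of H2]] by simp
  also have "\<dots> = integral\<^sup>L (lborel \<Otimes>\<^sub>M lborel) (\<lambda>x. case_prod H1 x + case_prod H2 x)"
    using I[of H1] I[of H2] by simp
  also have "\<dots> = integral\<^sup>L (lborel \<Otimes>\<^sub>M lborel) (\<lambda>x. (\<lambda>(t,u). f t * k u) x + case_prod H3 x)"
    by (rule Bochner_Integration.integral_cong) (auto simp: H1_def H2_def H3_def split: prod.splits)
  also have "\<dots> = integral\<^sup>L (lborel \<Otimes>\<^sub>M lborel) (\<lambda>(t,u). f t * k u) + integral\<^sup>L (lborel \<Otimes>\<^sub>M lborel) (case_prod H3)"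
    using P I[of H3] by simp
  also have "\<dots> = (\<integral>t. f t \<partial>lborel) * (\<integral>u. k u \<partial>lborel)"
    using lborel_pair.integral_fst[OF P] lborel_pair.integral_fst[OF I[of H3]] e3 e4 by simp
  finally show ?thesis using e1 e2 by simp
qed

lemma borel_version0:
  fixes f :: "real \<Rightarrow> real"
  assumes f: "integrable (lebesgue_on S) f" and S: "S \<in> sets lebesgue"
  obtains fb where "fb \<in> borel_measurable borel" "integrable lborel fb"
    "AE x in lebesgue. indicator S x * f x = fb x"
proof -
  have eq: "(\<lambda>x. indicator S x * f x) = (\<lambda>x. if x \<in> S then f x else 0)"
    by (auto simp: indicator_def)
  have m: "(\<lambda>x. indicator S x * f x) \<in> borel_measurable lebesgue"
    using borel_measurable_if_I[OF borel_measurable_integrable[OF f] S] eq by simp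
  obtain fb where fb: "fb \<in> borel_measurable lborel" "AE x in lborel. indicator S x * f x = fb x"
    using completion_ex_borel_measurable_real[OF m] by blast
  have ae: "AE x in lebesgue. indicator S x * f x = fb x"
    using fb(2) by (rule AE_completion)
  have i: "integrable lebesgue (\<lambda>x. indicator S x * f x)"
    using f S Lebesgue_Measure.integrable_restrict_UNIV[of S f] eq by simp
  have fbm: "fb \<in> borel_measurable lebesgue"
    using fb(1) measurable_completion by blast
  have "integrable lebesgue fb"
    by (rule Bochner_Integration.integrable_cong_AE_imp[OF i fbm ae])
  then have "integrable lborel fb"
    using fb by (simp add: integrable_completion)
  then show ?thesis using that fb ae by auto
qed

lemma borel_version:
  fixes f :: "real \<Rightarrow> real"
  assumes f: "integrable (lebesgue_on S) f" and S: "S \<in> sets borel"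
  obtains fb where "fb \<in> borel_measurable borel" "integrable lborel fb"
    "AE x in lebesgue. indicator S x * f x = fb x" "\<And>x. x \<notin> S \<Longrightarrow> fb x = 0"
proof -
  have S': "S \<in> sets lebesgue" using S by (auto intro: measurable_completion)
  obtain fb where fb: "fb \<in> borel_measurable borel" "integrable lborel fb"
    "AE x in lebesgue. indicator S x * f x = fb x"
    using borel_version0[OF f S'] by blast
  have [measurable]: "S \<in> sets borel" using S by simp
  have "(\<lambda>x. indicator S x * fb x) \<in> borel_measurable borel" using fb(1) by measurable
  moreover have "integrable lborel (\<lambda>x. indicator S x * fb x)"
    using integrable_mult_indicator[OF _ fb(2), of S] S by simp
  moreover have "AE x in lebesgue. indicator S x * f x = indicator S x * fb x"
    using fb(3) by eventually_elim (auto simp: indicator_def)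
  moreover have "\<And>x. x \<notin> S \<Longrightarrow> indicator S x * fb x = 0" by simp
  ultimately show ?thesis using that by blast
qed

lemma borel_version_integral:
  fixes f :: "real \<Rightarrow> real"
  assumes f: "integrable (lebesgue_on S) f" and S: "S \<in> sets lebesgue"
    and fb: "fb \<in> borel_measurable borel" "AE x in lebesgue. indicator S x * f x = fb x"
    and T: "T \<in> sets borel" "T \<subseteq> S"
  shows "integral\<^sup>L (lebesgue_on T) f = (\<integral>x. indicator T x * fb x \<partial>lborel)"
proof -
  have eq: "(\<lambda>x. indicator S x * f x) = (\<lambda>x. if x \<in> S then f x else 0)"
    by (auto simp: indicator_def)
  have m: "(\<lambda>x. indicator S x * f x) \<in> borel_measurable lebesgue"
    using borel_measurable_if_I[OF borel_measurable_integrable[OF f] S] eq by simp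
  have "integral\<^sup>L (lebesgue_on T) f = integral\<^sup>L lebesgue (\<lambda>x. indicator T x *\<^sub>R f x)"
    using T by (simp add: integral_restrict_space)
  also have "\<dots> = integral\<^sup>L lebesgue (\<lambda>x. indicator T x * (indicator S x * f x))"
    using T by (intro Bochner_Integration.integral_cong) (auto simp: indicator_def)
  also have "\<dots> = integral\<^sup>L lebesgue (\<lambda>x. indicator T x * fb x)"
  proof (rule integral_cong_AE)
    show "(\<lambda>x. indicator T x * (indicator S x * f x)) \<in> borel_measurable lebesgue"
      using m T by (intro borel_measurable_times[OF _ m]) (auto intro: measurable_completion)
    show "(\<lambda>x. indicator T x * fb x) \<in> borel_measurable lebesgue"
      using fb(1) T by (intro borel_measurable_times) (auto intro: measurable_completion)
    show "AE x in lebesgue. indicator T x * (indicator S x * f x) = indicator T x * fb x"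
      using fb(2) by auto
  qed
  also have "\<dots> = (\<integral>x. indicator T x * fb x \<partial>lborel)"
    using fb(1) T by (intro integral_completion) auto
  finally show ?thesis .
qed

lemma indef_meas[measurable]:
  fixes fb :: "real \<Rightarrow> real"
  assumes [measurable]: "fb \<in> borel_measurable lborel"
  shows "(\<lambda>t. \<integral>u. indicator {..t} u * fb u \<partial>lborel) \<in> borel_measurable lborel"
proof -
  have "(\<lambda>(t,u). (if u \<le> t then fb u else 0)) \<in> borel_measurable (lborel \<Otimes>\<^sub>M lborel)"
    by measurable
  then have "(\<lambda>t. \<integral>u. (if u \<le> t then fb u else 0) \<partial>lborel) \<in> borel_measurable lborel"
    by (rule lborel.borel_measurable_lebesgue_integral)
  then show ?thesis by (simp add: indicator_def if_distrib cong: if_cong)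
qed

lemma outer_integral:
  fixes f :: "real \<Rightarrow> real"
  assumes f: "integrable (lebesgue_on S) f" and S: "S \<in> sets borel"
    and fb: "fb \<in> borel_measurable borel" "AE x in lebesgue. indicator S x * f x = fb x"
    and Kb: "Kb \<in> borel_measurable borel" and KK: "\<And>t. t \<in> S \<Longrightarrow> K t = Kb t"
  shows "integral\<^sup>L (lebesgue_on S) (\<lambda>t. f t * K t) = (\<integral>t. fb t * Kb t \<partial>lborel)"
proof -
  have S': "S \<in> sets lebesgue" using S by (auto intro: measurable_completion)
  have eq: "(\<lambda>x. indicator S x * f x) = (\<lambda>x. if x \<in> S then f x else 0)"
    by (auto simp: indicator_def)
  have m: "(\<lambda>x. indicator S x * f x) \<in> borel_measurable lebesgue"
    using borel_measurable_if_I[OF borel_measurable_integrable[OF f] S'] eq by simp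
  have "integral\<^sup>L (lebesgue_on S) (\<lambda>t. f t * K t) = integral\<^sup>L lebesgue (\<lambda>t. indicator S t *\<^sub>R (f t * K t))"
    using S' by (simp add: integral_restrict_space)
  also have "\<dots> = integral\<^sup>L lebesgue (\<lambda>t. (indicator S t * f t) * Kb t)"
    using KK by (intro Bochner_Integration.integral_cong) (auto simp: indicator_def)
  also have "\<dots> = integral\<^sup>L lebesgue (\<lambda>t. fb t * Kb t)"
  proof (rule integral_cong_AE)
    show "(\<lambda>t. (indicator S t * f t) * Kb t) \<in> borel_measurable lebesgue"
      using Kb by (intro borel_measurable_times[OF m]) (auto intro: measurable_completion)
    show "(\<lambda>x. fb x * Kb x) \<in> borel_measurable lebesgue"
      using fb(1) Kb by (intro borel_measurable_times) (auto intro: measurable_completion)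
    show "AE x in lebesgue. indicator S x * f x * Kb x = fb x * Kb x"
      using fb(2) by auto
  qed
  also have "\<dots> = (\<integral>t. fb t * Kb t \<partial>lborel)"
    using fb(1) Kb by (intro integral_completion) auto
  finally show ?thesis .
qed

lemma ibp:
  fixes f k :: "real \<Rightarrow> real"
  assumes f: "integrable (lebesgue_on {0..s}) f" and k: "integrable (lebesgue_on {0..s}) k"
  shows "integral\<^sup>L (lebesgue_on {0..s}) (\<lambda>t. f t * integral\<^sup>L (lebesgue_on {0..t}) k)
       + integral\<^sup>L (lebesgue_on {0..s}) (\<lambda>t. k t * integral\<^sup>L (lebesgue_on {0..t}) f)
       = integral\<^sup>L (lebesgue_on {0..s}) f * integral\<^sup>L (lebesgue_on {0..s}) k"
proof -
  have S: "{0..s} \<in> sets borel" by simp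
  have S': "{0..s} \<in> sets lebesgue" by simp
  obtain fb where fb: "fb \<in> borel_measurable borel" "integrable lborel fb"
    "AE x in lebesgue. indicator {0..s} x * f x = fb x" "\<And>x. x \<notin> {0..s} \<Longrightarrow> fb x = 0"
    using borel_version[OF f S] by blast
  obtain kb where kb: "kb \<in> borel_measurable borel" "integrable lborel kb"
    "AE x in lebesgue. indicator {0..s} x * k x = kb x" "\<And>x. x \<notin> {0..s} \<Longrightarrow> kb x = 0"
    using borel_version[OF k S] by blast
  have [measurable]: "fb \<in> borel_measurable lborel" "kb \<in> borel_measurable lborel" using fb kb by auto
  have part: "integral\<^sup>L (lebesgue_on {0..t}) h = (\<integral>u. indicator {..t} u * hb u \<partial>lborel)"
    if h: "integrable (lebesgue_on {0..s}) h" and hb: "hb \<in> borel_measurable borel"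
      "AE x in lebesgue. indicator {0..s} x * h x = hb x" "\<And>x. x \<notin> {0..s} \<Longrightarrow> hb x = 0"
      and t: "t \<in> {0..s}" for h hb :: "real \<Rightarrow> real" and t
  proof -
    have "integral\<^sup>L (lebesgue_on {0..t}) h = (\<integral>u. indicator {0..t} u * hb u \<partial>lborel)"
      using t by (intro borel_version_integral[OF h S' hb(1,2)]) auto
    also have "\<dots> = (\<integral>u. indicator {..t} u * hb u \<partial>lborel)"
      using t hb(3) by (intro Bochner_Integration.integral_cong) (auto simp: indicator_def)
    finally show ?thesis .
  qed
  have whole: "integral\<^sup>L (lebesgue_on {0..s}) h = (\<integral>u. hb u \<partial>lborel)"
    if h: "integrable (lebesgue_on {0..s}) h" and hb: "hb \<in> borel_measurable borel"
      "AE x in lebesgue. indicator {0..s} x * h x = hb x" "\<And>x. x \<notin> {0..s} \<Longrightarrow> hb x = 0"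
      for h hb :: "real \<Rightarrow> real"
  proof -
    have "integral\<^sup>L (lebesgue_on {0..s}) h = (\<integral>u. indicator {0..s} u * hb u \<partial>lborel)"
      by (intro borel_version_integral[OF h S' hb(1,2)]) auto
    also have "\<dots> = (\<integral>u. hb u \<partial>lborel)"
      using hb(3) by (intro Bochner_Integration.integral_cong) (auto simp: indicator_def)
    finally show ?thesis .
  qed
  have o1: "integral\<^sup>L (lebesgue_on {0..s}) (\<lambda>t. f t * integral\<^sup>L (lebesgue_on {0..t}) k)
      = (\<integral>t. fb t * (\<integral>u. indicator {..t} u * kb u \<partial>lborel) \<partial>lborel)"
    by (rule outer_integral[OF f S fb(1,3)]) (use part[OF k kb(1,3,4)] in auto)
  have o2: "integral\<^sup>L (lebesgue_on {0..s}) (\<lambda>t. k t * integral\<^sup>L (lebesgue_on {0..t}) f)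
      = (\<integral>t. kb t * (\<integral>u. indicator {..t} u * fb u \<partial>lborel) \<partial>lborel)"
    by (rule outer_integral[OF k S kb(1,3)]) (use part[OF f fb(1,3,4)] in auto)
  show ?thesis
    using ibp_lborel[OF fb(2) kb(2)] o1 o2 whole[OF f fb(1,3,4)] whole[OF k kb(1,3,4)]
    by simp
qed

lemma ftc:
  fixes P P' :: "real \<Rightarrow> real"
  assumes d: "\<forall>x\<in>{0..1}. (P has_real_derivative P' x) (at x within {0..1})"
    and c: "continuous_on {0..1} P'" and t: "t \<in> {0..1}"
  shows "integral\<^sup>L (lebesgue_on {0..t}) P' = P t - P 0"
proof -
  have c': "continuous_on {0..t} P'" using t by (intro continuous_on_subset[OF c]) auto
  have "(P' has_integral (integral\<^sup>L (lebesgue_on {0..t}) P')) {0..t}"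
    by (rule has_integral_integral_lebesgue_on[OF continuous_imp_integrable_real[OF c']]) simp
  moreover have "(P' has_integral (P t - P 0)) {0..t}"
  proof (rule fundamental_theorem_of_calculus)
    show "0 \<le> t" using t by simp
    show "(P has_vector_derivative P' x) (at x within {0..t})" if x: "x \<in> {0..t}" for x
    proof (rule has_vector_derivative_within_subset)
      show "(P has_vector_derivative P' x) (at x within {0..1})"
        using d x t by (auto simp: has_real_derivative_iff_has_vector_derivative)
      show "{0..t} \<subseteq> {0..1}" using t by auto
    qed
  qed
  ultimately show ?thesis by (rule has_integral_unique)
qed

lemma sq_ineqs:
  fixes x y :: real
  shows "(x + y)^2 \<le> 2*x^2 + 2*y^2" "\<bar>x\<bar> \<le> 1 + x^2" "\<bar>x * y\<bar> \<le> x^2 + y^2"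
proof -
  have "(x + y)^2 + (x - y)^2 = 2*x^2 + 2*y^2" by (simp add: power2_eq_square algebra_simps)
  moreover have "0 \<le> (x - y)^2" by simp
  ultimately show "(x + y)^2 \<le> 2*x^2 + 2*y^2" by linarith
  show "\<bar>x\<bar> \<le> 1 + x^2"
  proof (cases "\<bar>x\<bar> \<le> 1")
    case True then show ?thesis by (smt (verit) zero_le_power2)
  next
    case False
    then have "\<bar>x\<bar> * 1 \<le> \<bar>x\<bar> * \<bar>x\<bar>" by (intro mult_left_mono) auto
    then show ?thesis by (simp add: power2_eq_square)
  qed
  have "0 \<le> (\<bar>x\<bar> - \<bar>y\<bar>)^2" by simp
  then have "2 * (\<bar>x\<bar> * \<bar>y\<bar>) \<le> x^2 + y^2" by (simp add: power2_eq_square algebra_simps)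
  moreover have "0 \<le> \<bar>x\<bar> * \<bar>y\<bar>" by simp
  ultimately show "\<bar>x * y\<bar> \<le> x^2 + y^2" unfolding abs_mult by linarith
qed

lemma cont_bounded:
  fixes k :: "real \<Rightarrow> 'b::real_normed_vector"
  assumes "continuous_on {a..b} k"
  obtains B where "B \<ge> 0" "\<And>t. t \<in> {a..b} \<Longrightarrow> norm (k t) \<le> B"
proof -
  have "compact (k ` {a..b})" using assms compact_Icc by (rule compact_continuous_image)
  then obtain B where "\<forall>x\<in>k ` {a..b}. norm x \<le> B" using compact_imp_bounded bounded_iff by metis
  then have "\<And>t. t \<in> {a..b} \<Longrightarrow> norm (k t) \<le> max B 0"
    by (meson image_eqI max.coboundedI1)
  then show ?thesis using that[of "max B 0"] by simp
qed

lemma cont_meas: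
  fixes f :: "real \<Rightarrow> 'b::euclidean_space"
  assumes "continuous_on {a..b} f"
  shows "f \<in> borel_measurable (lebesgue_on {a..b})"
  using assms by (rule continuous_imp_measurable_on_sets_lebesgue) simp

lemma L2_bound:
  fixes V :: "real \<Rightarrow> 'a::euclidean_space" and f :: "real \<Rightarrow> 'b::euclidean_space"
  assumes V: "L2 s V" and f: "f \<in> borel_measurable (lebesgue_on {0..s})"
    and k: "continuous_on {0..s} k" and b: "\<And>t. t \<in> {0..s} \<Longrightarrow> norm (f t) \<le> k t * norm (V t)"
  shows "L2 s f"
proof -
  obtain B where B: "B \<ge> 0" "\<And>t. t \<in> {0..s} \<Longrightarrow> norm (k t) \<le> B" using cont_bounded[OF k] by blast
  have iV: "integrable (lebesgue_on {0..s}) (\<lambda>t. B^2 * (norm (V t))\<^sup>2)"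
    using V unfolding L2_def by simp
  have "integrable (lebesgue_on {0..s}) (\<lambda>t. (norm (f t))\<^sup>2)"
  proof (rule Bochner_Integration.integrable_bound[OF iV])
    show "(\<lambda>t. (norm (f t))\<^sup>2) \<in> borel_measurable (lebesgue_on {0..s})" using f by measurable
    show "AE t in lebesgue_on {0..s}. norm ((norm (f t))\<^sup>2) \<le> norm (B^2 * (norm (V t))\<^sup>2)"
    proof (rule AE_I2)
      fix t assume t: "t \<in> space (lebesgue_on {0..s})"
      then have t': "t \<in> {0..s}" by simp
      have "k t * norm (V t) \<le> B * norm (V t)" using B(2)[OF t'] by (intro mult_right_mono) auto
      then have "norm (f t) \<le> B * norm (V t)"
        using b[OF t'] by linarith
      then have "(norm (f t))\<^sup>2 \<le> (B * norm (V t))\<^sup>2" by (intro power_mono) auto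
      then show "norm ((norm (f t))\<^sup>2) \<le> norm (B^2 * (norm (V t))\<^sup>2)"
        by (simp add: power_mult_distrib)
    qed
  qed
  then show ?thesis using f unfolding L2_def by simp
qed

lemma L2_add:
  fixes V W :: "real \<Rightarrow> 'a::euclidean_space"
  assumes V: "L2 s V" and W: "L2 s W"
  shows "L2 s (\<lambda>t. V t + W t)" "L2 s (\<lambda>t. V t - W t)"
proof -
  have m[measurable]: "V \<in> borel_measurable (lebesgue_on {0..s})" "W \<in> borel_measurable (lebesgue_on {0..s})"
    using V W unfolding L2_def by auto
  have i: "integrable (lebesgue_on {0..s}) (\<lambda>t. 2 * (norm (V t))\<^sup>2 + 2 * (norm (W t))\<^sup>2)"
    using V W unfolding L2_def by simp
  have key: "(norm (a + b))\<^sup>2 \<le> 2 * (norm a)\<^sup>2 + 2 * (norm b)\<^sup>2" "(norm (a - b))\<^sup>2 \<le> 2 * (norm a)\<^sup>2 + 2 * (norm b)\<^sup>2" for a b :: 'a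
  proof -
    have "(norm (a + b))\<^sup>2 \<le> (norm a + norm b)\<^sup>2" by (intro power_mono norm_triangle_ineq) auto
    also have "\<dots> \<le> 2 * (norm a)\<^sup>2 + 2 * (norm b)\<^sup>2" by (rule sq_ineqs(1))
    finally show "(norm (a + b))\<^sup>2 \<le> 2 * (norm a)\<^sup>2 + 2 * (norm b)\<^sup>2" .
    have "(norm (a - b))\<^sup>2 \<le> (norm a + norm b)\<^sup>2" by (intro power_mono norm_triangle_ineq4) auto
    also have "\<dots> \<le> 2 * (norm a)\<^sup>2 + 2 * (norm b)\<^sup>2" by (rule sq_ineqs(1))
    finally show "(norm (a - b))\<^sup>2 \<le> 2 * (norm a)\<^sup>2 + 2 * (norm b)\<^sup>2" .
  qed
  have "integrable (lebesgue_on {0..s}) (\<lambda>t. (norm (V t + W t))\<^sup>2)"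
    by (rule Bochner_Integration.integrable_bound[OF i]) (measurable, rule AE_I2, simp add: key(1))
  then show "L2 s (\<lambda>t. V t + W t)" unfolding L2_def by simp
  have "integrable (lebesgue_on {0..s}) (\<lambda>t. (norm (V t - W t))\<^sup>2)"
    by (rule Bochner_Integration.integrable_bound[OF i]) (measurable, rule AE_I2, simp add: key(2))
  then show "L2 s (\<lambda>t. V t - W t)" unfolding L2_def by simp
qed

lemma L2_cont:
  fixes f :: "real \<Rightarrow> 'a::euclidean_space"
  assumes "continuous_on {0..s} f"
  shows "L2 s f"
  unfolding L2_def
proof
  show "f \<in> borel_measurable (lebesgue_on {0..s})" using assms by (rule cont_meas)
  have "continuous_on {0..s} (\<lambda>t. (norm (f t))\<^sup>2)" using assms by (intro continuous_intros)
  then show "integrable (lebesgue_on {0..s}) (\<lambda>t. (norm (f t))\<^sup>2)" by (rule continuous_imp_integrable_real)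
qed

lemma L2_integrable:
  fixes a :: "real \<Rightarrow> real"
  assumes "L2 s a"
  shows "integrable (lebesgue_on {0..s}) a"
proof (rule Bochner_Integration.integrable_bound)
  have "integrable (lebesgue_on {0..s}) (\<lambda>t. 1::real)"
    by (rule continuous_imp_integrable_real) simp
  then show "integrable (lebesgue_on {0..s}) (\<lambda>t. 1 + (norm (a t))\<^sup>2)"
    using assms unfolding L2_def by simp
  show "a \<in> borel_measurable (lebesgue_on {0..s})" using assms unfolding L2_def by simp
  show "AE t in lebesgue_on {0..s}. norm (a t) \<le> norm (1 + (norm (a t))\<^sup>2)"
    by (intro AE_I2) (simp add: sq_ineqs(2))
qed

lemma L2_mult:
  fixes a b :: "real \<Rightarrow> real"
  assumes a: "L2 s a" and b: "L2 s b"
  shows "integrable (lebesgue_on {0..s}) (\<lambda>t. a t * b t)"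
proof (rule Bochner_Integration.integrable_bound)
  show "integrable (lebesgue_on {0..s}) (\<lambda>t. (norm (a t))\<^sup>2 + (norm (b t))\<^sup>2)"
    using a b unfolding L2_def by simp
  have [measurable]: "a \<in> borel_measurable (lebesgue_on {0..s})" "b \<in> borel_measurable (lebesgue_on {0..s})"
    using a b unfolding L2_def by auto
  show "(\<lambda>t. a t * b t) \<in> borel_measurable (lebesgue_on {0..s})" by measurable
  show "AE t in lebesgue_on {0..s}. norm (a t * b t) \<le> norm ((norm (a t))\<^sup>2 + (norm (b t))\<^sup>2)"
    by (intro AE_I2) (simp add: sq_ineqs(3))
qed

lemma int_mult_cont:
  fixes f c :: "real \<Rightarrow> real"
  assumes f: "integrable (lebesgue_on {0..s}) f" and c: "continuous_on {0..s} c"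
  shows "integrable (lebesgue_on {0..s}) (\<lambda>t. f t * c t)" "integrable (lebesgue_on {0..s}) (\<lambda>t. c t * f t)"
proof -
  obtain B where B: "B \<ge> 0" "\<And>t. t \<in> {0..s} \<Longrightarrow> norm (c t) \<le> B" using cont_bounded[OF c] by blast
  have "integrable (lebesgue_on {0..s}) (\<lambda>t. f t * c t)"
  proof (rule Bochner_Integration.integrable_bound)
    show "integrable (lebesgue_on {0..s}) (\<lambda>t. B * norm (f t))" using f by simp
    show "(\<lambda>t. f t * c t) \<in> borel_measurable (lebesgue_on {0..s})"
      using borel_measurable_integrable[OF f] cont_meas[OF c] by measurable
    show "AE t in lebesgue_on {0..s}. norm (f t * c t) \<le> norm (B * norm (f t))"
      using B by (intro AE_I2) (auto simp: abs_mult mult.commute intro!: mult_right_mono)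
  qed
  then show "integrable (lebesgue_on {0..s}) (\<lambda>t. f t * c t)" "integrable (lebesgue_on {0..s}) (\<lambda>t. c t * f t)"
    by (simp_all add: mult.commute)
qed

lemma indef_cont:
  fixes k :: "real \<Rightarrow> real"
  assumes k: "integrable (lebesgue_on {0..s}) k" and t: "t \<le> s"
  shows "continuous_on {0..t} (\<lambda>u. integral\<^sup>L (lebesgue_on {0..u}) k)"
proof -
  have "integrable (lebesgue_on {0..t}) k" using t by (intro integrable_subinterval[OF k]) auto
  then show ?thesis by (rule indefinite_integral_continuous_real)
qed

lemma prod_rule:
  fixes P P' k :: "real \<Rightarrow> real"
  assumes d: "\<forall>x\<in>{0..1}. (P has_real_derivative P' x) (at x within {0..1})"
    and c: "continuous_on {0..1} P'" and cP: "continuous_on {0..1} P"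
    and k: "integrable (lebesgue_on {0..s}) k" and s: "s \<le> 1" and t: "t \<in> {0..s}"
  shows "integral\<^sup>L (lebesgue_on {0..t}) (\<lambda>u. P' u * integral\<^sup>L (lebesgue_on {0..u}) k + P u * k u)
       = P t * integral\<^sup>L (lebesgue_on {0..t}) k"
proof -
  have t1: "t \<le> 1" "0 \<le> t" "t \<le> s" using t s by auto
  have kt: "integrable (lebesgue_on {0..t}) k" using k t1 by (intro integrable_subinterval[OF k]) auto
  have c't: "continuous_on {0..t} P'" using c t1 by (intro continuous_on_subset[OF c]) auto
  have cPt: "continuous_on {0..t} P" using t1 by (intro continuous_on_subset[OF cP]) auto
  have P't: "integrable (lebesgue_on {0..t}) P'" by (rule continuous_imp_integrable_real[OF c't])
  define K where "K u = integral\<^sup>L (lebesgue_on {0..u}) k" for u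
  have Kc: "continuous_on {0..t} K" unfolding K_def by (rule indef_cont[OF k t1(3)])
  have i1: "integrable (lebesgue_on {0..t}) (\<lambda>u. P' u * K u)"
    by (rule continuous_imp_integrable_real) (intro continuous_intros c't Kc)
  have i2: "integrable (lebesgue_on {0..t}) (\<lambda>u. P u * k u)" by (rule int_mult_cont(2)[OF kt cPt])
  have i3: "integrable (lebesgue_on {0..t}) (\<lambda>u. k u * P 0)" by (simp add: kt)
  have "integral\<^sup>L (lebesgue_on {0..t}) (\<lambda>u. P' u * K u)
      + integral\<^sup>L (lebesgue_on {0..t}) (\<lambda>u. k u * integral\<^sup>L (lebesgue_on {0..u}) P')
      = integral\<^sup>L (lebesgue_on {0..t}) P' * K t"
    unfolding K_def by (rule ibp[OF P't kt])
  moreover have "integral\<^sup>L (lebesgue_on {0..t}) (\<lambda>u. k u * integral\<^sup>L (lebesgue_on {0..u}) P')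
      = integral\<^sup>L (lebesgue_on {0..t}) (\<lambda>u. P u * k u - k u * P 0)"
    using t1 by (intro Bochner_Integration.integral_cong) (auto simp: ftc[OF d c] algebra_simps)
  moreover have "integral\<^sup>L (lebesgue_on {0..t}) (\<lambda>u. P u * k u - k u * P 0)
      = integral\<^sup>L (lebesgue_on {0..t}) (\<lambda>u. P u * k u) - P 0 * K t"
    using i2 i3 unfolding K_def by simp
  moreover have "integral\<^sup>L (lebesgue_on {0..t}) P' = P t - P 0" using ftc[OF d c] t1 by simp
  moreover have "integral\<^sup>L (lebesgue_on {0..t}) (\<lambda>u. P' u * K u + P u * k u)
      = integral\<^sup>L (lebesgue_on {0..t}) (\<lambda>u. P' u * K u) + integral\<^sup>L (lebesgue_on {0..t}) (\<lambda>u. P u * k u)"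
    using i1 i2 by simp
  ultimately show ?thesis unfolding K_def by (simp add: algebra_simps)
qed

lemma L2_cmul:
  fixes V :: "real \<Rightarrow> 'a::euclidean_space" and m :: "real \<Rightarrow> real"
  assumes V: "L2 s V" and m: "continuous_on {0..s} m"
  shows "L2 s (\<lambda>t. m t *\<^sub>R V t)"
proof (rule L2_bound[OF V])
  have [measurable]: "V \<in> borel_measurable (lebesgue_on {0..s})" using V unfolding L2_def by simp
  have [measurable]: "m \<in> borel_measurable (lebesgue_on {0..s})" by (rule cont_meas[OF m])
  show "(\<lambda>t. m t *\<^sub>R V t) \<in> borel_measurable (lebesgue_on {0..s})" by measurable
  show "continuous_on {0..s} (\<lambda>t. norm (m t))" using m by (intro continuous_intros)
  show "norm (m t *\<^sub>R V t) \<le> norm (m t) * norm (V t)" for t by simp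
qed

lemma L2_smul:
  fixes a :: "real \<Rightarrow> real" and c :: "real \<Rightarrow> 'a::euclidean_space"
  assumes a: "L2 s a" and c: "continuous_on {0..s} c"
  shows "L2 s (\<lambda>t. a t *\<^sub>R c t)"
proof (rule L2_bound[OF a])
  have [measurable]: "a \<in> borel_measurable (lebesgue_on {0..s})" using a unfolding L2_def by simp
  have [measurable]: "c \<in> borel_measurable (lebesgue_on {0..s})" by (rule cont_meas[OF c])
  show "(\<lambda>t. a t *\<^sub>R c t) \<in> borel_measurable (lebesgue_on {0..s})" by measurable
  show "continuous_on {0..s} (\<lambda>t. norm (c t))" using c by (intro continuous_intros)
  show "norm (a t *\<^sub>R c t) \<le> norm (c t) * norm (a t)" for t by (simp add: mult.commute)
qed

lemma int0: "integral\<^sup>L (lebesgue_on {0..0::real}) f = 0"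
  by (rule integral_eq_zero_null_sets) simp

lemma bil_expand:
  fixes g :: "'a::euclidean_space \<Rightarrow> 'a \<Rightarrow> real"
  assumes bil: "bilinear g"
  shows "g (a *\<^sub>R x + b *\<^sub>R y) (c *\<^sub>R u + d *\<^sub>R v) = a*c * g x u + a*d * g x v + b*c * g y u + b*d * g y v"
  by (simp add: bilinear_ladd[OF bil] bilinear_radd[OF bil] bilinear_lmul[OF bil] bilinear_rmul[OF bil] algebra_simps)

lemma index_no_neg:
  fixes g :: "'a::euclidean_space \<Rightarrow> 'a \<Rightarrow> real"
  assumes bil: "bilinear g" and sym: "\<forall>x y. g x y = g y x" and idx: "form_index g = 1"
    and y: "g y y < 0" and x: "g x y = 0" "g x x < 0"
  shows False
proof -
  have g0: "g 0 z = 0" "g z 0 = 0" for z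
    using bilinear_lzero[OF bil] bilinear_rzero[OF bil] by auto
  have y0: "y \<noteq> 0" using y g0 by auto
  have xny: "x \<notin> span {y}"
  proof
    assume "x \<in> span {y}"
    then obtain k where k: "x = k *\<^sub>R y" by (auto simp: span_singleton)
    then have "k * g y y = 0" using x(1) bilinear_lmul[OF bil] by simp
    then have "k = 0" using y by simp
    then show False using k x(2) g0 by simp
  qed
  have ind: "independent {x, y}"
    using xny y0 by (intro independent_insertI) (auto simp: independent_empty intro: independent_insertI)
  have xy: "x \<noteq> y" using x y by auto
  have dimW: "dim (span {x, y}) = 2"
    using dim_span_eq_card_independent[OF ind] xy by simp
  have neg: "\<forall>z\<in>span {x, y}. z \<noteq> 0 \<longrightarrow> g z z < 0"
  proof (intro ballI impI)
    fix z assume z: "z \<in> span {x, y}" "z \<noteq> 0"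
    then obtain a b where ab: "z = a *\<^sub>R x + b *\<^sub>R y"
      by (auto simp: span_breakdown_eq span_singleton) (metis add.commute diff_add_cancel)
    have "g z z = a*a * g x x + b*b * g y y"
      using ab bil_expand[OF bil, of a x b y a x b y] x(1) sym by auto
    moreover have "a \<noteq> 0 \<or> b \<noteq> 0" using ab z(2) by auto
    moreover have "a*a * g x x \<le> 0" "b*b * g y y \<le> 0"
      using x(2) y by (auto simp: mult_nonneg_nonpos)
    moreover have "a \<noteq> 0 \<Longrightarrow> a*a * g x x < 0" using x(2) by (intro mult_pos_neg) (auto simp: zero_less_mult_iff)
    moreover have "b \<noteq> 0 \<Longrightarrow> b*b * g y y < 0" using y by (intro mult_pos_neg) (auto simp: zero_less_mult_iff)
    ultimately show "g z z < 0" by linarith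
  qed
  have "2 \<le> form_index g"
    unfolding form_index_def
  proof (rule Greatest_le_nat)
    show "\<exists>W. subspace W \<and> dim W = 2 \<and> (\<forall>x\<in>W. x \<noteq> 0 \<longrightarrow> g x x < 0)"
      using dimW neg by blast
    show "y \<le> DIM('a)" if "\<exists>W. subspace W \<and> dim W = y \<and> (\<forall>x\<in>W. x \<noteq> 0 \<longrightarrow> g x x < 0)" for y
      using that dim_subset_UNIV by blast
  qed
  then show False using idx by simp
qed

lemma perp_pos:
  fixes g :: "'a::euclidean_space \<Rightarrow> 'a \<Rightarrow> real"
  assumes g: "nondeg_sym_bilinear g" and idx: "form_index g = 1"
    and y: "g y y < 0" and x: "g x y = 0" "x \<noteq> 0"
  shows "0 < g x x"
proof (rule ccontr)
  assume "\<not> 0 < g x x"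
  then have le: "g x x \<le> 0" by simp
  have bil: "bilinear g" and sym: "\<forall>x y. g x y = g y x"
    and nd: "\<forall>x. (\<forall>y. g x y = 0) \<longrightarrow> x = 0"
    using g unfolding nondeg_sym_bilinear_def by auto
  show False
  proof (cases "g x x < 0")
    case True
    then show False using index_no_neg[OF bil sym idx y x(1)] by simp
  next
    case False
    then have gxx: "g x x = 0" using le by simp
    obtain w where w: "g x w \<noteq> 0" using nd x(2) by blast
    define w' where "w' = w - (g w y / g y y) *\<^sub>R y"
    have w'y: "g w' y = 0"
      using y unfolding w'_def by (simp add: bilinear_lsub[OF bil] bilinear_lmul[OF bil])
    have xw': "g x w' = g x w"
      using x(1) unfolding w'_def by (simp add: bilinear_rsub[OF bil] bilinear_rmul[OF bil])
    define b where "b = g x w"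
    define m where "m = \<bar>g w' w'\<bar> + 1"
    have m: "m > 0" "g w' w' < 2 * m" unfolding m_def by auto
    define x' where "x' = 1 *\<^sub>R x + (- (b/m)) *\<^sub>R w'"
    have x'y: "g x' y = 0"
      unfolding x'_def using x(1) w'y
      by (simp add: bilinear_lsub[OF bil] bilinear_lmul[OF bil])
    have "g x' x' = 1*1 * g x x + 1 * (-(b/m)) * g x w' + (-(b/m)) * 1 * g w' x + (-(b/m))*(-(b/m)) * g w' w'"
      unfolding x'_def by (rule bil_expand[OF bil])
    also have "\<dots> = (b/m)*(b/m) * (g w' w' - 2 * m)"
      using gxx xw' sym m(1) unfolding b_def by (simp add: field_simps)
    also have "\<dots> < 0"
    proof (rule mult_pos_neg)
      have "b / m \<noteq> 0" using w m(1) unfolding b_def by simp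
      then show "0 < b / m * (b / m)" by (metis not_real_square_gt_zero)
      show "g w' w' - 2 * m < 0" using m by simp
    qed
    finally show False using index_no_neg[OF bil sym idx y x'y] by simp
  qed
qed



locale setting =
  fixes g :: "'a::euclidean_space \<Rightarrow> 'a \<Rightarrow> real"
    and Y Y' Y'' :: "real \<Rightarrow> 'a"
    and A :: "real \<Rightarrow> 'a \<Rightarrow> 'a"
    and \<sigma> :: real
  assumes g: "nondeg_sym_bilinear g" and idx: "form_index g = 1"
    and dY: "\<forall>t\<in>{0..1}. (Y has_vector_derivative Y' t) (at t within {0..1})"
    and dY': "\<forall>t\<in>{0..1}. (Y' has_vector_derivative Y'' t) (at t within {0..1})"
    and timelike: "\<forall>t\<in>{0..1}. g (Y t) (Y t) < 0"
    and A: "\<forall>t\<in>{0..1}. \<forall>V W. g V W = gr g Y t (A t V) W"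
    and \<sigma>: "\<sigma> \<in> {0<..1}"
begin

lemma bil: "bilinear g" and sym: "g x y = g y x"
  using g unfolding nondeg_sym_bilinear_def by auto

lemma bb: "bounded_bilinear g"
  using bil bilinear_conv_bounded_bilinear by blast

lemma g_simps:
  "g (x + y) z = g x z + g y z" "g z (x + y) = g z x + g z y"
  "g (x - y) z = g x z - g y z" "g z (x - y) = g z x - g z y"
  "g (c *\<^sub>R x) z = c * g x z" "g z (c *\<^sub>R x) = c * g z x"
  "g 0 z = 0" "g z 0 = 0"
  using bilinear_ladd[OF bil] bilinear_radd[OF bil] bilinear_lsub[OF bil] bilinear_rsub[OF bil]
    bilinear_lmul[OF bil] bilinear_rmul[OF bil] bilinear_lzero[OF bil] bilinear_rzero[OF bil]
  by auto

lemma g_meas[measurable]: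
  assumes [measurable]: "F \<in> borel_measurable M" "G \<in> borel_measurable M"
  shows "(\<lambda>t. g (F t) (G t)) \<in> borel_measurable M"
proof -
  have "continuous_on UNIV (\<lambda>x. g (fst x) (snd x))"
    by (rule bounded_bilinear.continuous_on[OF bb]) (auto intro: continuous_intros)
  then show ?thesis using borel_measurable_continuous_Pair[OF assms] by blast
qed

lemma g_cont:
  assumes "continuous_on S F" "continuous_on S G"
  shows "continuous_on S (\<lambda>t. g (F t) (G t))"
  by (rule bounded_bilinear.continuous_on[OF bb assms])

lemma g_bounded:
  obtains C where "C \<ge> 0" "\<And>x y. \<bar>g x y\<bar> \<le> C * norm x * norm y"
proof -
  obtain B where B: "\<forall>x y. norm (g x y) \<le> B * norm x * norm y" using bilinear_bounded[OF bil] by blast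
  have "\<bar>g x y\<bar> \<le> \<bar>B\<bar> * norm x * norm y" for x y
    using B[rule_format, of x y] by (smt (verit) mult_right_mono norm_ge_zero real_norm_def zero_le_mult_iff)
  then show ?thesis using that[of "\<bar>B\<bar>"] by simp
qed

lemma cY: "continuous_on {0..1} Y"
  using dY by (intro continuous_on_vector_derivative) auto

lemma cY': "continuous_on {0..1} Y'"
  using dY' by (intro continuous_on_vector_derivative) auto

definition N where "N t = g (Y t) (Y t)"

lemma N_neg: "t \<in> {0..1} \<Longrightarrow> N t < 0" and N_nz: "t \<in> {0..1} \<Longrightarrow> N t \<noteq> 0"
  using timelike unfolding N_def by force+

lemma cN: "continuous_on {0..1} N"
  unfolding N_def by (intro g_cont cY)

lemma dN: "\<forall>t\<in>{0..1}. (N has_real_derivative (2 * g (Y' t) (Y t))) (at t within {0..1})"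
proof
  fix t :: real assume t: "t \<in> {0..1}"
  have "((\<lambda>t. g (Y t) (Y t)) has_vector_derivative (g (Y t) (Y' t) + g (Y' t) (Y t))) (at t within {0..1})"
    using bounded_bilinear.has_vector_derivative[OF bb, of Y "Y' t" t "{0..1}" Y "Y' t"] dY t by auto
  then show "(N has_real_derivative (2 * g (Y' t) (Y t))) (at t within {0..1})"
    unfolding N_def has_real_derivative_iff_has_vector_derivative by (simp add: sym[of "Y t"])
qed

lemma cN': "continuous_on {0..1} (\<lambda>t. 2 * g (Y' t) (Y t))"
  by (intro continuous_intros g_cont cY cY')

lemma dNinv: "\<forall>t\<in>{0..1}. ((\<lambda>t. 1 / N t) has_real_derivative (- 2 * g (Y' t) (Y t) / (N t)^2)) (at t within {0..1})"
proof
  fix t :: real assume t: "t \<in> {0..1}"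
  have "((\<lambda>t. inverse (N t)) has_real_derivative - (inverse (N t) * (2 * g (Y' t) (Y t)) * inverse (N t))) (at t within {0..1})"
    by (rule DERIV_inverse') (use dN t N_nz in auto)
  then show "((\<lambda>t. 1 / N t) has_real_derivative (- 2 * g (Y' t) (Y t) / (N t)^2)) (at t within {0..1})"
    by (simp add: divide_inverse power2_eq_square mult.commute mult.left_commute)
qed

lemma cNinv: "continuous_on {0..1} (\<lambda>t. 1 / N t)"
  using cN N_nz by (intro continuous_intros) auto

lemma cNinv': "continuous_on {0..1} (\<lambda>t. - 2 * g (Y' t) (Y t) / (N t)^2)"
  using cN N_nz by (intro continuous_intros g_cont cY cY') auto

lemma perp_pos': "t \<in> {0..1} \<Longrightarrow> g x (Y t) = 0 \<Longrightarrow> x \<noteq> 0 \<Longrightarrow> 0 < g x x"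
  using perp_pos[OF g idx, of "Y t" x] timelike by auto

lemma perp_nonneg: "t \<in> {0..1} \<Longrightarrow> g x (Y t) = 0 \<Longrightarrow> 0 \<le> g x x"
  using perp_pos'[of t x] g_simps by (cases "x = 0") auto

definition R where "R t x = x - (2 * g x (Y t) / N t) *\<^sub>R Y t"

lemma gr_R: "t \<in> {0..1} \<Longrightarrow> gr g Y t v w = g (R t v) w"
  unfolding gr_def R_def N_def by (simp add: g_simps sym[of w])

lemma gr_pos: assumes t: "t \<in> {0..1}" and d: "d \<noteq> 0" shows "0 < gr g Y t d d"
proof -
  define a where "a = g d (Y t) / N t"
  define e where "e = d - a *\<^sub>R Y t"
  have Nt: "N t < 0" using N_neg t by simp
  have ey: "g e (Y t) = 0" unfolding e_def a_def using Nt by (simp add: g_simps N_def)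
  have "gr g Y t d d = g e e - a * a * N t"
  proof -
    have dd: "d = e + a *\<^sub>R Y t" unfolding e_def by simp
    have "gr g Y t d d = g d d - 2 * g d (Y t) * g d (Y t) / N t" unfolding gr_def N_def by simp
    also have "g d (Y t) = a * N t" unfolding a_def using Nt by simp
    also have "g d d = g e e + a * a * N t"
      by (subst (1 2) dd) (simp add: g_simps ey sym[of "Y t" e] N_def algebra_simps)
    finally show ?thesis using Nt by (simp add: field_simps power2_eq_square)
  qed
  moreover have "0 \<le> g e e" using perp_nonneg[OF t ey] .
  moreover have "0 \<le> - (a * a * N t)" using Nt by (simp add: mult_nonneg_nonpos)
  moreover have "e = 0 \<Longrightarrow> a = 0 \<Longrightarrow> False" using d unfolding e_def by simp
  moreover have "e \<noteq> 0 \<Longrightarrow> 0 < g e e" using perp_pos'[OF t ey] by simp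
  moreover have "a \<noteq> 0 \<Longrightarrow> 0 < - (a * a * N t)"
  proof -
    assume "a \<noteq> 0"
    then have "0 < a * a" by (metis not_real_square_gt_zero)
    then have "a * a * N t < 0" using Nt by (rule mult_pos_neg)
    then show ?thesis by simp
  qed
  ultimately show ?thesis by fastforce
qed

lemma R_diff: "R t (u - v) = R t u - R t v"
  unfolding R_def by (simp add: g_simps diff_divide_distrib scaleR_diff_left algebra_simps)

lemma R_lin: "R t (a *\<^sub>R u + b *\<^sub>R v) = a *\<^sub>R R t u + b *\<^sub>R R t v"
  unfolding R_def by (simp add: g_simps add_divide_distrib scaleR_add_left algebra_simps)

lemma RR: "t \<in> {0..1} \<Longrightarrow> R t (R t x) = x"
  unfolding R_def using N_nz[of t] by (simp add: g_simps N_def[symmetric] field_simps)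

lemma A_eq: assumes t: "t \<in> {0..1}" shows "A t x = R t x"
proof (rule ccontr)
  define d where "d = A t x - R t x"
  assume "A t x \<noteq> R t x"
  then have "d \<noteq> 0" unfolding d_def by simp
  then have "0 < gr g Y t d d" by (rule gr_pos[OF t])
  moreover have "gr g Y t d d = 0"
  proof -
    have "gr g Y t d d = g (R t d) d" by (rule gr_R[OF t])
    also have "R t d = R t (A t x) - R t (R t x)" unfolding d_def by (rule R_diff)
    also have "g \<dots> d = gr g Y t (A t x) d - gr g Y t (R t x) d"
      using gr_R[OF t] by (simp add: g_simps)
    also have "gr g Y t (A t x) d = g x d" using A t by simp
    also have "gr g Y t (R t x) d = g x d"
    proof -
      have Nt: "N t \<noteq> 0" using N_nz t by simp
      have "gr g Y t (R t x) d = g (R t (R t x)) d" by (rule gr_R[OF t])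
      also have "R t (R t x) = x"
        unfolding R_def using Nt by (simp add: g_simps N_def[symmetric] field_simps)
      finally show ?thesis .
    qed
    finally show ?thesis by simp
  qed
  ultimately show False by simp
qed

lemma \<sigma>1: "0 < \<sigma>" "\<sigma> \<le> 1" using \<sigma> by auto

lemma S01: "t \<in> {0..\<sigma>} \<Longrightarrow> t \<in> {0..1}" using \<sigma>1 by auto

lemma contS: "continuous_on {0..1} f \<Longrightarrow> continuous_on {0..\<sigma>} f"
  using \<sigma>1 by (elim continuous_on_subset) auto

lemma L2_g:
  assumes V: "L2 \<sigma> V" and c: "continuous_on {0..1} c"
  shows "L2 \<sigma> (\<lambda>t. g (V t) (c t))" "L2 \<sigma> (\<lambda>t. g (c t) (V t))"
proof -
  obtain C where C: "C \<ge> 0" "\<And>x y. \<bar>g x y\<bar> \<le> C * norm x * norm y" using g_bounded by blast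
  have [measurable]: "V \<in> borel_measurable (lebesgue_on {0..\<sigma>})" using V unfolding L2_def by simp
  have [measurable]: "c \<in> borel_measurable (lebesgue_on {0..\<sigma>})" by (rule cont_meas[OF contS[OF c]])
  have k: "continuous_on {0..\<sigma>} (\<lambda>t. C * norm (c t))" by (intro continuous_intros contS[OF c])
  show "L2 \<sigma> (\<lambda>t. g (V t) (c t))"
    by (rule L2_bound[OF V _ k]) (measurable, use C(2) in \<open>simp add: algebra_simps\<close>)
  show "L2 \<sigma> (\<lambda>t. g (c t) (V t))"
    by (rule L2_bound[OF V _ k]) (measurable, use C(2)[of "c _" "V _"] in \<open>simp add: algebra_simps\<close>)
qed

lemma R_V:
  assumes t: "t \<in> {0..1}"
  shows "R t (a *\<^sub>R A t (Y t) + b *\<^sub>R A t (Y' t)) = a *\<^sub>R Y t + b *\<^sub>R Y' t"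
  using t by (simp add: A_eq R_lin RR)

lemma rhs_sub:
  assumes V: "L2 \<sigma> V" and h: "H1 \<sigma> h h'"
    and ae: "AE t in lebesgue_on {0..\<sigma>}. V t = h' t *\<^sub>R A t (Y t) + (2 * h t) *\<^sub>R A t (Y' t)"
    and W: "W \<in> K0 g Y Y' \<sigma>"
  shows "Rsig g Y \<sigma> V W = 0"
proof -
  let ?M = "lebesgue_on {0..\<sigma>}"
  have WL: "L2 \<sigma> W"
    and aeW: "AE t in ?M. g (W t) (Y t) = 2 * integral\<^sup>L (lebesgue_on {0..t}) (\<lambda>s. g (W s) (Y' s))"
    and W0: "integral\<^sup>L ?M (\<lambda>s. g (W s) (Y' s)) = 0"
    using W unfolding K0_def mem_Collect_eq by blast+
  define w where "w s = g (W s) (Y' s)" for s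
  define \<Phi> where "\<Phi> t = integral\<^sup>L (lebesgue_on {0..t}) w" for t
  have wL: "L2 \<sigma> w" unfolding w_def by (rule L2_g(1)[OF WL cY'])
  have wi: "integrable ?M w" by (rule L2_integrable[OF wL])
  have h'L: "L2 \<sigma> h'" using h unfolding H1_def by (rule conjunct1)
  have hH: "\<forall>t\<in>{0..\<sigma>}. h t = h 0 + integral\<^sup>L (lebesgue_on {0..t}) h'"
    using h unfolding H1_def by (rule conjunct2)
  have h'i: "integrable ?M h'" by (rule L2_integrable[OF h'L])
  define H where "H t = integral\<^sup>L (lebesgue_on {0..t}) h'" for t
  have \<Phi>c: "continuous_on {0..\<sigma>} \<Phi>" unfolding \<Phi>_def by (rule indef_cont[OF wi]) simp
  have Hc: "continuous_on {0..\<sigma>} H" unfolding H_def by (rule indef_cont[OF h'i]) simp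
  have meas[measurable]: "V \<in> borel_measurable ?M" "W \<in> borel_measurable ?M" "h' \<in> borel_measurable ?M"
    "w \<in> borel_measurable ?M" "\<Phi> \<in> borel_measurable ?M" "H \<in> borel_measurable ?M"
    "Y \<in> borel_measurable ?M" "Y' \<in> borel_measurable ?M"
    using V WL h'L wL cont_meas[OF \<Phi>c] cont_meas[OF Hc] cont_meas[OF contS[OF cY]] cont_meas[OF contS[OF cY']]
    unfolding L2_def by auto
  have eq1: "Rsig g Y \<sigma> V W = integral\<^sup>L ?M (\<lambda>t. 2 * (h' t * \<Phi> t + (h 0 + H t) * w t))"
    unfolding Rsig_def
  proof (rule integral_cong_AE)
    have m1: "(\<lambda>t. g (V t) (W t)) \<in> borel_measurable ?M" "(\<lambda>t. g (V t) (Y t)) \<in> borel_measurable ?M"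
      "(\<lambda>t. g (W t) (Y t)) \<in> borel_measurable ?M" "(\<lambda>t. g (Y t) (Y t)) \<in> borel_measurable ?M"
      by (rule g_meas[OF meas(1) meas(2)], rule g_meas[OF meas(1) meas(7)], rule g_meas[OF meas(2) meas(7)], rule g_meas[OF meas(7) meas(7)])
    show "(\<lambda>t. gr g Y t (V t) (W t)) \<in> borel_measurable ?M" unfolding gr_def
      using m1 by (intro borel_measurable_diff borel_measurable_times borel_measurable_divide) auto
    show "(\<lambda>t. 2 * (h' t * \<Phi> t + (h 0 + H t) * w t)) \<in> borel_measurable ?M" by measurable
    have "AE t in ?M. t \<in> {0..\<sigma>}" by (rule AE_I2) simp
    then show "AE t in ?M. gr g Y t (V t) (W t) = 2 * (h' t * \<Phi> t + (h 0 + H t) * w t)"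
      using ae aeW
    proof eventually_elim
      case (elim t)
      have t01: "t \<in> {0..1}" using S01 elim(1) by simp
      have "gr g Y t (V t) (W t) = g (R t (V t)) (W t)" by (rule gr_R[OF t01])
      also have "R t (V t) = h' t *\<^sub>R Y t + (2 * h t) *\<^sub>R Y' t" using elim(2) R_V[OF t01] by simp
      also have "g \<dots> (W t) = h' t * g (W t) (Y t) + 2 * h t * w t"
        unfolding w_def g_simps sym[of "Y t" "W t"] sym[of "Y' t" "W t"] by simp
      also have "\<dots> = 2 * (h' t * \<Phi> t + (h 0 + H t) * w t)"
      proof -
        have "h t = h 0 + H t" using hH elim(1) unfolding H_def by blast
        then show ?thesis using elim(3) unfolding \<Phi>_def w_def by (simp add: algebra_simps)
      qed
      finally show ?case .
    qed
  qed
  have i1: "integrable ?M (\<lambda>t. h' t * \<Phi> t)" by (rule int_mult_cont(1)[OF h'i \<Phi>c])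
  have i2: "integrable ?M (\<lambda>t. w t * H t)" by (rule int_mult_cont(1)[OF wi Hc])
  have i3: "integrable ?M (\<lambda>t. h 0 * w t)" using wi by simp
  have "integral\<^sup>L ?M (\<lambda>t. 2 * (h' t * \<Phi> t + (h 0 + H t) * w t))
      = integral\<^sup>L ?M (\<lambda>t. 2 * (h' t * \<Phi> t) + 2 * (h 0 * w t) + 2 * (w t * H t))"
    by (rule Bochner_Integration.integral_cong[OF refl]) (simp add: algebra_simps)
  also have "\<dots> = integral\<^sup>L ?M (\<lambda>t. 2 * (h' t * \<Phi> t) + 2 * (h 0 * w t)) + integral\<^sup>L ?M (\<lambda>t. 2 * (w t * H t))"
    by (rule Bochner_Integration.integral_add) (use i1 i2 i3 in auto)
  also have "integral\<^sup>L ?M (\<lambda>t. 2 * (h' t * \<Phi> t) + 2 * (h 0 * w t)) = integral\<^sup>L ?M (\<lambda>t. 2 * (h' t * \<Phi> t)) + integral\<^sup>L ?M (\<lambda>t. 2 * (h 0 * w t))"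
    by (rule Bochner_Integration.integral_add) (use i1 i2 i3 in auto)
  also have "integral\<^sup>L ?M (\<lambda>t. 2 * (h' t * \<Phi> t)) + integral\<^sup>L ?M (\<lambda>t. 2 * (h 0 * w t)) + integral\<^sup>L ?M (\<lambda>t. 2 * (w t * H t))
     = 2 * (integral\<^sup>L ?M (\<lambda>t. h' t * \<Phi> t) + integral\<^sup>L ?M (\<lambda>t. w t * H t)) + 2 * (h 0 * integral\<^sup>L ?M w)"
    by (simp only: integral_mult_right_zero) (simp add: algebra_simps)
  also have "integral\<^sup>L ?M (\<lambda>t. h' t * \<Phi> t) + integral\<^sup>L ?M (\<lambda>t. w t * H t) = H \<sigma> * \<Phi> \<sigma>"
    using ibp[OF h'i wi] unfolding \<Phi>_def H_def by simp
  also have "\<Phi> \<sigma> = 0" using W0 unfolding \<Phi>_def w_def by simp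
  also have "integral\<^sup>L ?M w = 0" using W0 unfolding w_def by simp
  finally show ?thesis using eq1 by simp
qed

end



lemma L2_cong:
  assumes "\<And>t. t \<in> {0..s} \<Longrightarrow> f t = g t" and "L2 s f"
  shows "L2 s g"
proof -
  have "g \<in> borel_measurable (lebesgue_on {0..s})"
    using assms measurable_lebesgue_cong[of "{0..s}" f g] unfolding L2_def by simp
  moreover have "integrable (lebesgue_on {0..s}) (\<lambda>t. (norm (g t))\<^sup>2)"
    using assms(2) unfolding L2_def
    by (subst Bochner_Integration.integrable_cong[OF refl, where g="\<lambda>t. (norm (f t))\<^sup>2"]) (auto simp: assms(1))
  ultimately show ?thesis unfolding L2_def by simp
qed

locale vctx = setting +
  fixes V :: "real \<Rightarrow> 'a"
  assumes VL: "L2 \<sigma> V" and orth: "\<forall>W\<in>K0 g Y Y' \<sigma>. Rsig g Y \<sigma> V W = 0"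
begin

definition "U t = R t (V t)"
definition "f1 t = g (U t) (Y t)"
definition "al t = f1 t / N t"
definition "ga t = g (Y' t) (Y t) / N t"
definition "Z t = Y' t - ga t *\<^sub>R Y t"
definition "U1 t = U t - al t *\<^sub>R Y t"
definition "Kt t = integral\<^sup>L (lebesgue_on {0..t}) f1"
definition "zz t = g (Z t) (Z t) / (N t)^2"
definition "aa = integral\<^sup>L (lebesgue_on {0..\<sigma>}) (\<lambda>t. g (U1 t) (Z t) / N t - 2 * Kt t * zz t)"
definition "qq = integral\<^sup>L (lebesgue_on {0..\<sigma>}) zz"
definition "cc = (if qq = 0 then 0 else aa / (2 * qq))"
definition "hh t = (cc + Kt t) / N t"
definition "hh' t = al t - 2 * ga t * hh t"
definition "D t = U1 t - (2 * hh t) *\<^sub>R Z t"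
definition "ps t = g (D t) (Z t)"
definition "kk t = ps t / N t"
definition "Ps t = integral\<^sup>L (lebesgue_on {0..t}) kk"
definition "W t = D t + (2 * Ps t) *\<^sub>R Y t"

lemma cga: "continuous_on {0..1} ga"
  unfolding ga_def using cN N_nz by (intro continuous_intros g_cont cY cY') auto

lemma cZ: "continuous_on {0..1} Z"
  unfolding Z_def by (intro continuous_intros cga cY cY')

lemma czz: "continuous_on {0..1} zz"
  unfolding zz_def using cN N_nz by (intro continuous_intros g_cont cZ) auto

lemma UL: "L2 \<sigma> U"
proof -
  have "L2 \<sigma> (\<lambda>t. (2 / N t) *\<^sub>R g (V t) (Y t))"
    by (rule L2_cmul[OF L2_g(1)[OF VL cY]]) (use cN N_nz in \<open>intro contS continuous_intros, auto\<close>)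
  then have "L2 \<sigma> (\<lambda>t. ((2 / N t) *\<^sub>R g (V t) (Y t)) *\<^sub>R Y t)"
    by (rule L2_smul) (rule contS[OF cY])
  then have "L2 \<sigma> (\<lambda>t. V t - ((2 / N t) *\<^sub>R g (V t) (Y t)) *\<^sub>R Y t)"
    by (rule L2_add(2)[OF VL])
  then show ?thesis
    by (rule L2_cong[rotated]) (simp add: U_def R_def)
qed

lemma f1L: "L2 \<sigma> f1" unfolding f1_def by (rule L2_g(1)[OF UL cY])

lemma f1i: "integrable (lebesgue_on {0..\<sigma>}) f1" by (rule L2_integrable[OF f1L])

lemma alL: "L2 \<sigma> al"
proof -
  have "L2 \<sigma> (\<lambda>t. (1 / N t) *\<^sub>R f1 t)"
    by (rule L2_cmul[OF f1L]) (use cN N_nz in \<open>intro contS continuous_intros, auto\<close>)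
  then show ?thesis by (rule L2_cong[rotated]) (simp add: al_def)
qed

lemma U1L: "L2 \<sigma> U1"
  using L2_add(2)[OF UL L2_smul[OF alL contS[OF cY]]] by (rule L2_cong[rotated]) (simp add: U1_def)

lemma cKt: "continuous_on {0..\<sigma>} Kt"
  unfolding Kt_def by (rule indef_cont[OF f1i]) simp

lemma chh: "continuous_on {0..\<sigma>} hh"
  unfolding hh_def using cKt contS[OF cN] N_nz S01 by (intro continuous_intros) auto

lemma hh'L: "L2 \<sigma> hh'"
proof -
  have "continuous_on {0..\<sigma>} (\<lambda>t. 2 * ga t * hh t)" by (intro continuous_intros contS[OF cga] chh)
  from L2_add(2)[OF alL L2_cont[OF this]] show ?thesis by (rule L2_cong[rotated]) (simp add: hh'_def)
qed

lemma DL: "L2 \<sigma> D"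
proof -
  have "continuous_on {0..\<sigma>} (\<lambda>t. (2 * hh t) *\<^sub>R Z t)" by (intro continuous_intros contS[OF cZ] chh)
  from L2_add(2)[OF U1L L2_cont[OF this]] show ?thesis by (rule L2_cong[rotated]) (simp add: D_def)
qed

lemma psL: "L2 \<sigma> ps" unfolding ps_def by (rule L2_g(1)[OF DL cZ])

lemma kki: "integrable (lebesgue_on {0..\<sigma>}) kk"
proof -
  have "L2 \<sigma> (\<lambda>t. (1 / N t) *\<^sub>R ps t)"
    by (rule L2_cmul[OF psL]) (use cN N_nz in \<open>intro contS continuous_intros, auto\<close>)
  then have "L2 \<sigma> kk" by (rule L2_cong[rotated]) (simp add: kk_def)
  then show ?thesis by (rule L2_integrable)
qed

lemma cPs: "continuous_on {0..\<sigma>} Ps"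
  unfolding Ps_def by (rule indef_cont[OF kki]) simp

lemma WL: "L2 \<sigma> W"
proof -
  have "continuous_on {0..\<sigma>} (\<lambda>t. (2 * Ps t) *\<^sub>R Y t)" by (intro continuous_intros contS[OF cY] cPs)
  from L2_add(1)[OF DL L2_cont[OF this]] show ?thesis by (rule L2_cong[rotated]) (simp add: W_def)
qed

context
  fixes t :: real assumes t: "t \<in> {0..1}"
begin

lemma Nt: "N t \<noteq> 0" using N_nz t by simp

lemma gU1Y: "g (U1 t) (Y t) = 0"
  unfolding U1_def al_def f1_def using Nt by (simp add: g_simps N_def[symmetric])

lemma gZY: "g (Z t) (Y t) = 0"
  unfolding Z_def ga_def using Nt by (simp add: g_simps N_def[symmetric])

lemma gDY: "g (D t) (Y t) = 0"
  unfolding D_def by (simp add: g_simps gU1Y gZY)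

lemma gDY': "g (D t) (Y' t) = ps t"
proof -
  have "Y' t = Z t + ga t *\<^sub>R Y t" unfolding Z_def by simp
  then have "g (D t) (Y' t) = g (D t) (Z t) + ga t * g (D t) (Y t)" by (simp add: g_simps)
  then show ?thesis by (simp add: gDY ps_def)
qed

lemma gWY: "g (W t) (Y t) = 2 * Ps t * N t"
  unfolding W_def by (simp add: g_simps gDY N_def)

lemma gWY': "g (W t) (Y' t) = ps t + 2 * Ps t * g (Y' t) (Y t)"
  unfolding W_def by (simp add: g_simps gDY' sym[of "Y t" "Y' t"])

lemma U_decomp: "U t = hh' t *\<^sub>R Y t + (2 * hh t) *\<^sub>R Y' t + D t"
  unfolding hh'_def D_def U1_def Z_def by (simp add: algebra_simps)

lemma gUW: "g (U t) (W t) = g (D t) (D t) + 2 * hh t * ps t + 2 * f1 t * Ps t"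
proof -
  have U: "U t = al t *\<^sub>R Y t + D t + (2 * hh t) *\<^sub>R Z t" unfolding D_def U1_def by simp
  have "g (U t) (W t) = g (U t) (D t) + 2 * Ps t * f1 t" unfolding W_def f1_def by (simp add: g_simps)
  also have "g (U t) (D t) = al t * g (Y t) (D t) + g (D t) (D t) + 2 * hh t * g (Z t) (D t)"
    unfolding U by (simp add: g_simps)
  also have "g (Y t) (D t) = 0" using gDY sym[of "Y t" "D t"] by simp
  also have "g (Z t) (D t) = ps t" unfolding ps_def by (rule sym)
  finally show ?thesis by (simp add: algebra_simps)
qed

lemma V_eq: "D t = 0 \<Longrightarrow> V t = hh' t *\<^sub>R A t (Y t) + (2 * hh t) *\<^sub>R A t (Y' t)"
proof -
  assume D0: "D t = 0"
  have "V t = R t (U t)" unfolding U_def by (simp add: RR[OF t])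
  also have "\<dots> = R t (hh' t *\<^sub>R Y t + (2 * hh t) *\<^sub>R Y' t)" using U_decomp D0 by simp
  also have "\<dots> = hh' t *\<^sub>R A t (Y t) + (2 * hh t) *\<^sub>R A t (Y' t)" by (simp add: R_lin A_eq[OF t])
  finally show ?thesis .
qed

end

lemma Kt0: "Kt 0 = 0" unfolding Kt_def by (rule int0)

lemma H1: "H1 \<sigma> hh hh'"
  unfolding H1_def
proof (intro conjI hh'L ballI)
  fix t assume tS: "t \<in> {0..\<sigma>}"
  have t01: "t \<in> {0..1}" using S01[OF tS] .
  define P where "P u = 1 / N u" for u
  define P' where "P' u = - 2 * g (Y' u) (Y u) / (N u)^2" for u
  have dP: "\<forall>x\<in>{0..1}. (P has_real_derivative P' x) (at x within {0..1})"
    using dNinv unfolding P_def P'_def by simp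
  have cP': "continuous_on {0..1} P'" using cNinv' unfolding P'_def by simp
  have cP: "continuous_on {0..1} P" using cNinv unfolding P_def by simp
  have pr: "integral\<^sup>L (lebesgue_on {0..t}) (\<lambda>u. P' u * Kt u + P u * f1 u) = P t * Kt t"
    using prod_rule[OF dP cP' cP f1i \<sigma>1(2) tS] unfolding Kt_def by simp
  have ft: "integral\<^sup>L (lebesgue_on {0..t}) P' = P t - P 0" using ftc[OF dP cP' t01] .
  have tt: "t \<le> \<sigma>" "0 \<le> t" using tS by auto
  have f1t: "integrable (lebesgue_on {0..t}) f1" by (rule integrable_subinterval[OF f1i]) (use tt in auto)
  have cPt: "continuous_on {0..t} P" using t01 by (intro continuous_on_subset[OF cP]) auto
  have cP't: "continuous_on {0..t} P'" using t01 by (intro continuous_on_subset[OF cP']) auto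
  have cKtt: "continuous_on {0..t} Kt" using tt by (intro continuous_on_subset[OF cKt]) auto
  have i1: "integrable (lebesgue_on {0..t}) (\<lambda>u. P' u * Kt u + P u * f1 u)"
  proof (rule Bochner_Integration.integrable_add)
    show "integrable (lebesgue_on {0..t}) (\<lambda>u. P' u * Kt u)"
      by (rule continuous_imp_integrable_real) (intro continuous_intros cP't cKtt)
    show "integrable (lebesgue_on {0..t}) (\<lambda>u. P u * f1 u)" by (rule int_mult_cont(2)[OF f1t cPt])
  qed
  have i2: "integrable (lebesgue_on {0..t}) (\<lambda>u. cc * P' u)"
    using continuous_imp_integrable_real[OF cP't] by simp
  have "integral\<^sup>L (lebesgue_on {0..t}) hh' = integral\<^sup>L (lebesgue_on {0..t}) (\<lambda>u. (P' u * Kt u + P u * f1 u) + cc * P' u)"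
  proof (rule Bochner_Integration.integral_cong[OF refl])
    fix u assume "u \<in> space (lebesgue_on {0..t})"
    then have "u \<in> {0..1}" using t01 by auto
    then have Nu: "N u \<noteq> 0" using N_nz by simp
    show "hh' u = (P' u * Kt u + P u * f1 u) + cc * P' u"
      unfolding hh'_def al_def ga_def hh_def P_def P'_def using Nu
      by (simp add: field_simps power2_eq_square)
  qed
  also have "\<dots> = P t * Kt t + cc * (P t - P 0)"
    using i1 i2 pr ft by simp
  also have "\<dots> = hh t - hh 0"
    using N_nz[OF t01] N_nz[of 0] unfolding hh_def P_def Kt0 by (simp add: field_simps)
  finally show "hh t = hh 0 + integral\<^sup>L (lebesgue_on {0..t}) hh'" by simp
qed

lemma intW: assumes tS: "t \<in> {0..\<sigma>}"
  shows "integral\<^sup>L (lebesgue_on {0..t}) (\<lambda>s. g (W s) (Y' s)) = N t * Ps t"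
proof -
  have t01: "t \<in> {0..1}" using S01[OF tS] .
  have pr: "integral\<^sup>L (lebesgue_on {0..t}) (\<lambda>u. 2 * g (Y' u) (Y u) * Ps u + N u * kk u) = N t * Ps t"
    using prod_rule[OF dN cN' cN kki \<sigma>1(2) tS] unfolding Ps_def by simp
  have "integral\<^sup>L (lebesgue_on {0..t}) (\<lambda>s. g (W s) (Y' s))
      = integral\<^sup>L (lebesgue_on {0..t}) (\<lambda>u. 2 * g (Y' u) (Y u) * Ps u + N u * kk u)"
  proof (rule Bochner_Integration.integral_cong[OF refl])
    fix u assume "u \<in> space (lebesgue_on {0..t})"
    then have u01: "u \<in> {0..1}" using t01 by auto
    then have Nu: "N u \<noteq> 0" using N_nz by simp
    show "g (W u) (Y' u) = 2 * g (Y' u) (Y u) * Ps u + N u * kk u"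
      using gWY'[OF u01] Nu unfolding kk_def by (simp add: field_simps)
  qed
  then show ?thesis using pr by simp
qed

lemma zz_nonneg: "u \<in> {0..1} \<Longrightarrow> 0 \<le> zz u"
  unfolding zz_def using perp_nonneg[of u "Z u"] gZY[of u] by simp

lemma Ps_sigma: "Ps \<sigma> = 0"
proof -
  let ?M = "lebesgue_on {0..\<sigma>}"
  define F where "F u = g (U1 u) (Z u) / N u - 2 * Kt u * zz u" for u
  have pt: "kk u = F u - 2 * cc * zz u" if u: "u \<in> {0..1}" for u
  proof -
    have Nu: "N u \<noteq> 0" using N_nz u by simp
    have e: "ps u = g (U1 u) (Z u) - 2 * hh u * g (Z u) (Z u)" unfolding ps_def D_def by (simp add: g_simps)
    show ?thesis unfolding kk_def e F_def hh_def zz_def using Nu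
      by (simp add: field_simps power2_eq_square)
  qed
  have iF: "integrable ?M F"
  proof -
    have "L2 \<sigma> (\<lambda>u. (1 / N u) *\<^sub>R g (U1 u) (Z u))"
      by (rule L2_cmul[OF L2_g(1)[OF U1L cZ]]) (use cN N_nz in \<open>intro contS continuous_intros, auto\<close>)
    then have "integrable ?M (\<lambda>u. (1 / N u) *\<^sub>R g (U1 u) (Z u))" by (rule L2_integrable)
    moreover have "integrable ?M (\<lambda>u. 2 * Kt u * zz u)"
      by (rule continuous_imp_integrable_real) (intro continuous_intros cKt contS[OF czz])
    ultimately have "integrable ?M (\<lambda>u. (1 / N u) *\<^sub>R g (U1 u) (Z u) - 2 * Kt u * zz u)" by simp
    then show ?thesis unfolding F_def by simp
  qed
  have izz: "integrable ?M zz" by (rule continuous_imp_integrable_real[OF contS[OF czz]])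
  have PsE: "Ps \<sigma> = aa - 2 * cc * qq"
  proof -
    have "Ps \<sigma> = integral\<^sup>L ?M (\<lambda>u. F u - 2 * cc * zz u)"
      unfolding Ps_def by (rule Bochner_Integration.integral_cong[OF refl]) (use S01 pt in auto)
    also have "\<dots> = integral\<^sup>L ?M F - 2 * cc * qq"
      using iF izz unfolding qq_def by simp
    finally show ?thesis unfolding aa_def F_def by simp
  qed
  show ?thesis
  proof (cases "qq = 0")
    case False
    then show ?thesis using PsE unfolding cc_def by (simp add: field_simps)
  next
    case True
    have "AE u in ?M. 0 \<le> zz u" by (rule AE_I2) (use S01 zz_nonneg in auto)
    then have "AE u in ?M. zz u = 0" using integral_nonneg_eq_0_iff_AE[OF izz] True unfolding qq_def by simp
    moreover have "AE u in ?M. u \<in> {0..\<sigma>}" by (rule AE_I2) simp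
    ultimately have "AE u in ?M. kk u = 0"
    proof eventually_elim
      case (elim u)
      then have u: "u \<in> {0..1}" using S01 by auto
      have "g (Z u) (Z u) = 0" using N_nz[OF u] elim(1) unfolding zz_def by simp
      then have "Z u = 0" using perp_pos'[OF u gZY[OF u]] by force
      then show "kk u = 0" unfolding kk_def ps_def by (simp add: g_simps)
    qed
    then show ?thesis unfolding Ps_def by (rule integral_eq_zero_AE)
  qed
qed

lemma W_K0: "W \<in> K0 g Y Y' \<sigma>"
  unfolding K0_def mem_Collect_eq
proof (intro conjI WL)
  show "AE t in lebesgue_on {0..\<sigma>}. g (W t) (Y t) = 2 * integral\<^sup>L (lebesgue_on {0..t}) (\<lambda>s. g (W s) (Y' s))"
  proof (rule AE_I2)
    fix t assume "t \<in> space (lebesgue_on {0..\<sigma>})"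
    then have tS: "t \<in> {0..\<sigma>}" by simp
    show "g (W t) (Y t) = 2 * integral\<^sup>L (lebesgue_on {0..t}) (\<lambda>s. g (W s) (Y' s))"
      using gWY[OF S01[OF tS]] intW[OF tS] by simp
  qed
  show "integral\<^sup>L (lebesgue_on {0..\<sigma>}) (\<lambda>s. g (W s) (Y' s)) = 0"
    using intW[of \<sigma>] \<sigma>1 Ps_sigma by simp
qed


lemma D_ae: "AE t in lebesgue_on {0..\<sigma>}. D t = 0"
proof -
  let ?M = "lebesgue_on {0..\<sigma>}"
  have R0: "Rsig g Y \<sigma> V W = 0" using orth W_K0 by blast
  have Dm: "D \<in> borel_measurable ?M" using DL unfolding L2_def by simp
  have e1: "Rsig g Y \<sigma> V W = integral\<^sup>L ?M (\<lambda>t. g (D t) (D t) + (2 * hh t * ps t + 2 * f1 t * Ps t))"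
    unfolding Rsig_def
  proof (rule Bochner_Integration.integral_cong[OF refl])
    fix t assume "t \<in> space ?M"
    then have t: "t \<in> {0..1}" using S01 by auto
    show "gr g Y t (V t) (W t) = g (D t) (D t) + (2 * hh t * ps t + 2 * f1 t * Ps t)"
      using gr_R[OF t] gUW[OF t] unfolding U_def by simp
  qed
  have iDD: "integrable ?M (\<lambda>t. g (D t) (D t))"
  proof -
    obtain C where C: "C \<ge> 0" "\<And>x y. \<bar>g x y\<bar> \<le> C * norm x * norm y" using g_bounded by blast
    show ?thesis
    proof (rule Bochner_Integration.integrable_bound)
      show "integrable ?M (\<lambda>t. C * (norm (D t))\<^sup>2)" using DL unfolding L2_def by simp
      show "(\<lambda>t. g (D t) (D t)) \<in> borel_measurable ?M" by (rule g_meas[OF Dm Dm])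
      show "AE t in ?M. norm (g (D t) (D t)) \<le> norm (C * (norm (D t))\<^sup>2)"
        by (rule AE_I2) (use C in \<open>simp add: power2_eq_square mult.assoc\<close>)
    qed
  qed
  have psi: "integrable ?M ps" by (rule L2_integrable[OF psL])
  have iA: "integrable ?M (\<lambda>t. ps t * (2 * hh t))"
    by (rule int_mult_cont(1)[OF psi]) (intro continuous_intros chh)
  have iB: "integrable ?M (\<lambda>t. f1 t * (2 * Ps t))"
    by (rule int_mult_cont(1)[OF f1i]) (intro continuous_intros cPs)
  have iC: "integrable ?M (\<lambda>t. f1 t * Ps t)" by (rule int_mult_cont(1)[OF f1i cPs])
  have iD: "integrable ?M (\<lambda>t. kk t * Kt t)" by (rule int_mult_cont(1)[OF kki cKt])
  have e2: "integral\<^sup>L ?M (\<lambda>t. 2 * hh t * ps t + 2 * f1 t * Ps t) = 0"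
  proof -
    have "integral\<^sup>L ?M (\<lambda>t. 2 * hh t * ps t + 2 * f1 t * Ps t)
        = integral\<^sup>L ?M (\<lambda>t. 2 * cc * kk t + 2 * (f1 t * Ps t + kk t * Kt t))"
    proof (rule Bochner_Integration.integral_cong[OF refl])
      fix t assume "t \<in> space ?M"
      then have t: "t \<in> {0..1}" using S01 by auto
      show "2 * hh t * ps t + 2 * f1 t * Ps t = 2 * cc * kk t + 2 * (f1 t * Ps t + kk t * Kt t)"
        unfolding hh_def kk_def using N_nz[OF t] by (simp add: field_simps)
    qed
    also have "\<dots> = 2 * cc * integral\<^sup>L ?M kk + 2 * (integral\<^sup>L ?M (\<lambda>t. f1 t * Ps t) + integral\<^sup>L ?M (\<lambda>t. kk t * Kt t))"
      using kki iC iD by simp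
    also have "integral\<^sup>L ?M (\<lambda>t. f1 t * Ps t) + integral\<^sup>L ?M (\<lambda>t. kk t * Kt t) = Kt \<sigma> * Ps \<sigma>"
      using ibp[OF f1i kki] unfolding Ps_def Kt_def by simp
    also have "integral\<^sup>L ?M kk = Ps \<sigma>" unfolding Ps_def ..
    finally show ?thesis using Ps_sigma by simp
  qed
  have "integral\<^sup>L ?M (\<lambda>t. g (D t) (D t) + (2 * hh t * ps t + 2 * f1 t * Ps t))
      = integral\<^sup>L ?M (\<lambda>t. g (D t) (D t)) + integral\<^sup>L ?M (\<lambda>t. 2 * hh t * ps t + 2 * f1 t * Ps t)"
  proof (rule Bochner_Integration.integral_add[OF iDD])
    show "integrable ?M (\<lambda>t. 2 * hh t * ps t + 2 * f1 t * Ps t)"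
      using Bochner_Integration.integrable_add[OF iA iB] by (simp add: algebra_simps)
  qed
  then have I0: "integral\<^sup>L ?M (\<lambda>t. g (D t) (D t)) = 0" using R0 e1 e2 by simp
  have nn: "AE t in ?M. 0 \<le> g (D t) (D t)"
    by (rule AE_I2) (use S01 perp_nonneg gDY in auto)
  have "AE t in ?M. g (D t) (D t) = 0" using integral_nonneg_eq_0_iff_AE[OF iDD nn] I0 by simp
  moreover have "AE u in ?M. u \<in> {0..\<sigma>}" by (rule AE_I2) simp
  ultimately show ?thesis
  proof eventually_elim
    case (elim t)
    then have t: "t \<in> {0..1}" using S01 by auto
    show "D t = 0" using perp_pos'[OF t gDY[OF t]] elim(1) by force
  qed
qed

lemma lhs_sub: "\<exists>h h'. H1 \<sigma> h h' \<and> (AE t in lebesgue_on {0..\<sigma>}. V t = h' t *\<^sub>R A t (Y t) + (2 * h t) *\<^sub>R A t (Y' t))"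
proof (intro exI conjI)
  show "H1 \<sigma> hh hh'" by (rule H1)
  have "AE u in lebesgue_on {0..\<sigma>}. u \<in> {0..\<sigma>}" by (rule AE_I2) simp
  with D_ae show "AE t in lebesgue_on {0..\<sigma>}. V t = hh' t *\<^sub>R A t (Y t) + (2 * hh t) *\<^sub>R A t (Y' t)"
  proof eventually_elim
    case (elim t)
    then show ?case using V_eq[of t] S01 by auto
  qed
qed

end

theorem mainTheorem19:
  fixes g :: "'a::euclidean_space \<Rightarrow> 'a \<Rightarrow> real"
    and Y Y' Y'' :: "real \<Rightarrow> 'a"
    and A :: "real \<Rightarrow> 'a \<Rightarrow> 'a"
    and \<sigma> :: real
  assumes g: "nondeg_sym_bilinear g" and idx: "form_index g = 1"
    and dY: "\<forall>t\<in>{0..1}. (Y has_vector_derivative Y' t) (at t within {0..1})"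
    and dY': "\<forall>t\<in>{0..1}. (Y' has_vector_derivative Y'' t) (at t within {0..1})"
    and cY'': "continuous_on {0..1} Y''"
    and timelike: "\<forall>t\<in>{0..1}. g (Y t) (Y t) < 0"
    and A: "\<forall>t\<in>{0..1}. \<forall>V W. g V W = gr g Y t (A t V) W"
    and \<sigma>: "\<sigma> \<in> {0<..1}"
  shows "{V. L2 \<sigma> V \<and> (\<forall>W\<in>K0 g Y Y' \<sigma>. Rsig g Y \<sigma> V W = 0)} =
         {V. L2 \<sigma> V \<and> (\<exists>h h'. H1 \<sigma> h h' \<and>
               (AE t in lebesgue_on {0..\<sigma>}.
                  V t = h' t *\<^sub>R A t (Y t) + (2 * h t) *\<^sub>R A t (Y' t)))}"
proof -
  interpret setting g Y Y' Y'' A \<sigma>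
    using assms unfolding setting_def by auto
  show ?thesis
  proof (rule equalityI; rule subsetI)
    fix V assume "V \<in> {V. L2 \<sigma> V \<and> (\<forall>W\<in>K0 g Y Y' \<sigma>. Rsig g Y \<sigma> V W = 0)}"
    then have V: "L2 \<sigma> V" and o: "\<forall>W\<in>K0 g Y Y' \<sigma>. Rsig g Y \<sigma> V W = 0" by auto
    interpret vctx g Y Y' Y'' A \<sigma> V
      using V o by unfold_locales auto
    show "V \<in> {V. L2 \<sigma> V \<and> (\<exists>h h'. H1 \<sigma> h h' \<and>
               (AE t in lebesgue_on {0..\<sigma>}.
                  V t = h' t *\<^sub>R A t (Y t) + (2 * h t) *\<^sub>R A t (Y' t)))}"
      using V lhs_sub by blast
  next
    fix V assume "V \<in> {V. L2 \<sigma> V \<and> (\<exists>h h'. H1 \<sigma> h h' \<and>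
               (AE t in lebesgue_on {0..\<sigma>}.
                  V t = h' t *\<^sub>R A t (Y t) + (2 * h t) *\<^sub>R A t (Y' t)))}"
    then obtain h h' where V: "L2 \<sigma> V" and h: "H1 \<sigma> h h'"
      and ae: "AE t in lebesgue_on {0..\<sigma>}. V t = h' t *\<^sub>R A t (Y t) + (2 * h t) *\<^sub>R A t (Y' t)"
      by blast
    show "V \<in> {V. L2 \<sigma> V \<and> (\<forall>W\<in>K0 g Y Y' \<sigma>. Rsig g Y \<sigma> V W = 0)}"
      using rhs_sub[OF V h ae] V by blast
  qed
qed

end
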